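(* Let $f \in \mathbb{Z}[x]$ be a tower-stable polynomial, let $a$ be a positive integer, let $p$ be a prime number and $k$ a positive integer. Put $\kappa = \kappa_{f,a}$, $\lambda = \lambda_{f,a}$ and $$\mu_p = \prod_{i=0}^{\lambda(p)-1} f'\big(f^{\kappa(p)+i}(a)\big).$$ (i) If $\mu_p \equiv 0 \pmod p$, then $\lambda(p^k) = \lambda(p)$ and $\kappa(p^k) \le \kappa(p) + (k-1)\lambda(p)$. (ii) If $\mu_p \not\equiv 0 \pmod p$, then $\kappa(p^k) = \kappa(p)$ and $\lambda(p^k)$ divides $\lambda(p)\cdot(p-1)\cdot p^{k-1}$.
   Context: $f^j$ is the $j$-th iterate of $f$ and $f'$ its derivative. For a positive integer $n$, $f_n:\mathbb{Z}/n\mathbb{Z}\to\mathbb{Z}/n\mathbb{Z}$ is the reduction of $f$. $\kappa_{f,a}(n)$ (tail length) and $\lambda_{f,a}(n)$ (cycle length) are the unique integers $\kappa\ge0$, $\lambda\ge1$ such that for all $k'\ge0$, $l'\ge1$: $f_n^{k'}(\bar a) = f_n^{k'+l'}(\bar a)$ iff $\kappa\le k'$ and $\lambda\mid l'$, where $\bar a = a \bmod n$. $f$ is tower-stable if for every prime $q$, $f_q$ is not a cyclic permutation of $\mathbb{Z}/q\mathbb{Z}$ of length $q$. *)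

theory Defs
  imports "HOL-Computational_Algebra.Polynomial"
begin

text \<open>Reduction f_n of f modulo n, acting on representatives 0..n-1 of Z/nZ.\<close>
definition red :: "int poly \<Rightarrow> nat \<Rightarrow> int \<Rightarrow> int" where
  "red f n x = poly f x mod int n"

definition is_tail_cycle :: "int poly \<Rightarrow> int \<Rightarrow> nat \<Rightarrow> nat \<Rightarrow> nat \<Rightarrow> bool" where
  "is_tail_cycle f a n kap lam \<longleftrightarrow> lam \<ge> 1 \<and>
     (\<forall>k' l'. l' \<ge> 1 \<longrightarrow>
        (((red f n) ^^ k') (a mod int n) = ((red f n) ^^ (k' + l')) (a mod int n)
          \<longleftrightarrow> kap \<le> k' \<and> lam dvd l'))"

definition kappa :: "int poly \<Rightarrow> int \<Rightarrow> nat \<Rightarrow> nat" where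
  "kappa f a n = fst (THE p. is_tail_cycle f a n (fst p) (snd p))"

definition lambda :: "int poly \<Rightarrow> int \<Rightarrow> nat \<Rightarrow> nat" where
  "lambda f a n = snd (THE p. is_tail_cycle f a n (fst p) (snd p))"

definition full_cycle :: "(int \<Rightarrow> int) \<Rightarrow> nat \<Rightarrow> bool" where
  "full_cycle g q \<longleftrightarrow> bij_betw g {0..<int q} {0..<int q} \<and>
     (\<forall>x\<in>{0..<int q}. \<forall>y\<in>{0..<int q}. \<exists>j. (g ^^ j) x = y)"

definition tower_stable :: "int poly \<Rightarrow> bool" where
  "tower_stable f \<longleftrightarrow> (\<forall>q::nat. prime q \<longrightarrow> \<not> full_cycle (red f q) q)"

end

theory Submission
  imports Defs "HOL-Number_Theory.Number_Theory"
begin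

section \<open>Generic tail/cycle existence\<close>

lemma shift_eq:
  fixes s :: "nat \<Rightarrow> 'a"
  assumes step: "\<And>i j. s i = s j \<Longrightarrow> s (Suc i) = s (Suc j)"
    and "s i = s j"
  shows "s (i + t) = s (j + t)"
  using assms(2) by (induction t) (auto intro: step)

lemma tail_cycle_exists:
  fixes s :: "nat \<Rightarrow> 'a"
  assumes fin: "finite (range s)"
    and step: "\<And>i j. s i = s j \<Longrightarrow> s (Suc i) = s (Suc j)"
  shows "\<exists>kp lm. lm \<ge> 1 \<and> (\<forall>k' l'. l' \<ge> 1 \<longrightarrow> (s k' = s (k' + l') \<longleftrightarrow> kp \<le> k' \<and> lm dvd l'))"
proof -
  have "\<not> inj s"
  proof
    assume "inj s"
    then have "finite (UNIV :: nat set)" using fin finite_imageD by blast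
    then show False by simp
  qed
  then obtain i j where ij: "i \<noteq> j" "s i = s j" unfolding inj_def by blast
  have "\<exists>k l. l \<ge> 1 \<and> s k = s (k + l)"
  proof (cases "i < j")
    case True
    then show ?thesis using ij by (intro exI[of _ i] exI[of _ "j - i"]) auto
  next
    case False
    then show ?thesis using ij by (intro exI[of _ j] exI[of _ "i - j"]) auto
  qed
  define kp where "kp = (LEAST k. \<exists>l. l \<ge> 1 \<and> s k = s (k + l))"
  have "\<exists>l. l \<ge> 1 \<and> s kp = s (kp + l)"
    unfolding kp_def using \<open>\<exists>k l. l \<ge> 1 \<and> s k = s (k + l)\<close> by (rule LeastI_ex)
  define lm where "lm = (LEAST l. l \<ge> 1 \<and> s kp = s (kp + l))"
  have lm: "lm \<ge> 1 \<and> s kp = s (kp + lm)"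
    unfolding lm_def using \<open>\<exists>l. l \<ge> 1 \<and> s kp = s (kp + l)\<close> by (rule LeastI_ex)
  have per1: "s (kp + t + lm) = s (kp + t)" for t
    using shift_eq[where s=s, OF step, of kp "kp + lm" t] lm by (simp add: ac_simps)
  have per: "s (kp + t + lm * m) = s (kp + t)" for t m
  proof (induction m)
    case (Suc m)
    have "s (kp + t + lm * Suc m) = s (kp + (t + lm * m) + lm)" by (simp add: ac_simps)
    also have "\<dots> = s (kp + (t + lm * m))" by (rule per1)
    finally show ?case using Suc by (simp add: ac_simps)
  qed simp
  show ?thesis
  proof (rule exI[of _ kp], rule exI[of _ lm], intro conjI allI impI)
    show "1 \<le> lm" using lm by simp
  next
    fix k' l' :: nat assume l': "1 \<le> l'"
    show "s k' = s (k' + l') \<longleftrightarrow> kp \<le> k' \<and> lm dvd l'"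
    proof
      assume "kp \<le> k' \<and> lm dvd l'"
      then obtain t m where "k' = kp + t" "l' = lm * m" by (metis dvdE le_Suc_ex)
      then show "s k' = s (k' + l')" using per[of t m] by simp
    next
      assume eq: "s k' = s (k' + l')"
      have kpk: "kp \<le> k'" unfolding kp_def using eq l' by (intro Least_le) blast
      obtain t where t: "k' = kp + t" using kpk le_Suc_ex by blast
      define r where "r = l' mod lm"
      have "l' = r + lm * (l' div lm)" unfolding r_def by simp
      then have "s (k' + l') = s (kp + (t + r) + lm * (l' div lm))" using t by (metis add.assoc)
      also have "\<dots> = s (k' + r)" using per[of "t + r" "l' div lm"] t by (simp add: ac_simps)
      finally have e2: "s k' = s (k' + r)" using eq by simp
      have "r = 0"
      proof (rule ccontr)
        assume "r \<noteq> 0"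
        have rl: "r < lm" unfolding r_def using lm by simp
        define u where "u = lm * k' - t"
        have tu: "t + u = lm * k'" unfolding u_def using lm t
          by (metis add_diff_inverse_nat le_add2 le_trans less_le_not_le mult_le_mono1 mult_1)
        have "s (k' + u) = s (k' + r + u)" using shift_eq[where s=s, OF step e2] by simp
        moreover have "s (k' + u) = s kp" using per[of 0 k'] t tu by (simp add: ac_simps)
        moreover have "s (k' + r + u) = s (kp + r)" using per[of r k'] t tu by (simp add: ac_simps)
        ultimately have "s kp = s (kp + r)" by simp
        then have "lm \<le> r" unfolding lm_def using \<open>r \<noteq> 0\<close> by (intro Least_le) simp
        then show False using rl by simp
      qed
      then show "kp \<le> k' \<and> lm dvd l'" using kpk r_def by auto
    qed
  qed
qed


lemma poly_cong_int:
  fixes f :: "int poly"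
  assumes "n dvd x - y"
  shows "n dvd poly f x - poly f y"
proof (induction f)
  case (pCons c g)
  have "poly (pCons c g) x - poly (pCons c g) y = (x - y) * poly g x + y * (poly g x - poly g y)"
    by (simp add: algebra_simps)
  then show ?case using pCons assms by (simp add: dvd_add dvd_mult2 dvd_mult)
qed simp

lemma poly_mod_int: "poly f (x mod n) mod n = poly f x mod (n::int)"
proof -
  have "n dvd poly f (x mod n) - poly f x"
    by (rule poly_cong_int) (simp add: mod_eq_dvd_iff[symmetric])
  then show ?thesis by (simp add: mod_eq_dvd_iff)
qed

lemma red_iter: "(red f n ^^ j) (a mod int n) = (poly f ^^ j) a mod int n"
  by (induction j) (simp_all add: red_def poly_mod_int)

lemma tc_unique:
  assumes "is_tail_cycle f a n k1 l1" "is_tail_cycle f a n k2 l2"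
  shows "k1 = k2 \<and> l1 = l2"
proof -
  have t1: "l1 \<ge> 1 \<and> (\<forall>k' l'. l' \<ge> 1 \<longrightarrow>
        (((red f n) ^^ k') (a mod int n) = ((red f n) ^^ (k' + l')) (a mod int n)
          \<longleftrightarrow> k1 \<le> k' \<and> l1 dvd l'))" using assms(1) unfolding is_tail_cycle_def .
  have t2: "l2 \<ge> 1 \<and> (\<forall>k' l'. l' \<ge> 1 \<longrightarrow>
        (((red f n) ^^ k') (a mod int n) = ((red f n) ^^ (k' + l')) (a mod int n)
          \<longleftrightarrow> k2 \<le> k' \<and> l2 dvd l'))" using assms(2) unfolding is_tail_cycle_def .
  have e1: "((red f n) ^^ k1) (a mod int n) = ((red f n) ^^ (k1 + l1)) (a mod int n)"
    using t1 by simp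
  have e2: "((red f n) ^^ k2) (a mod int n) = ((red f n) ^^ (k2 + l2)) (a mod int n)"
    using t2 by simp
  have "k2 \<le> k1 \<and> l2 dvd l1" using t1 t2 e1 by simp
  moreover have "k1 \<le> k2 \<and> l1 dvd l2" using t1 t2 e2 by simp
  ultimately show ?thesis by (auto intro: dvd_antisym)
qed

lemma tc_holds:
  assumes "n \<ge> 1"
  shows "is_tail_cycle f a n (kappa f a n) (lambda f a n)"
proof -
  define s where "s j = (red f n ^^ j) (a mod int n)" for j
  have "range s \<subseteq> {0..<int n}" unfolding s_def red_iter using assms by auto
  then have fin: "finite (range s)" by (rule finite_subset) simp
  have step: "s i = s j \<Longrightarrow> s (Suc i) = s (Suc j)" for i j unfolding s_def by simp
  obtain kp lm where "lm \<ge> 1 \<and> (\<forall>k' l'. l' \<ge> 1 \<longrightarrow> (s k' = s (k' + l') \<longleftrightarrow> kp \<le> k' \<and> lm dvd l'))"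
    using tail_cycle_exists[OF fin step] by blast
  then have tc: "is_tail_cycle f a n kp lm" unfolding is_tail_cycle_def s_def by blast
  have ex1: "\<exists>!pr. is_tail_cycle f a n (fst pr) (snd pr)"
  proof (rule ex1I[of _ "(kp, lm)"])
    show "is_tail_cycle f a n (fst (kp, lm)) (snd (kp, lm))" using tc by simp
    fix pr assume "is_tail_cycle f a n (fst pr) (snd pr)"
    then show "pr = (kp, lm)" using tc_unique[OF tc] by (metis prod.collapse)
  qed
  then show ?thesis unfolding kappa_def lambda_def using theI'[OF ex1] by simp
qed

lemma key:
  assumes "n \<ge> 1"
  shows "lambda f a n \<ge> 1"
    and "l' \<ge> 1 \<Longrightarrow> (int n dvd (poly f ^^ k') a - (poly f ^^ (k' + l')) a
           \<longleftrightarrow> kappa f a n \<le> k' \<and> lambda f a n dvd l')"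
proof -
  have tc: "is_tail_cycle f a n (kappa f a n) (lambda f a n)" by (rule tc_holds[OF assms])
  then show "lambda f a n \<ge> 1" unfolding is_tail_cycle_def by blast
  assume "l' \<ge> 1"
  then have "(red f n ^^ k') (a mod int n) = (red f n ^^ (k' + l')) (a mod int n)
      \<longleftrightarrow> kappa f a n \<le> k' \<and> lambda f a n dvd l'"
    using tc unfolding is_tail_cycle_def by blast
  then show "int n dvd (poly f ^^ k') a - (poly f ^^ (k' + l')) a
           \<longleftrightarrow> kappa f a n \<le> k' \<and> lambda f a n dvd l'"
    unfolding red_iter by (simp add: mod_eq_dvd_iff)
qed


section \<open>Taylor-type congruences\<close>

lemma taylor1:
  fixes f :: "int poly"
  shows "\<exists>c. poly f u - poly f v = (u - v) * (poly (pderiv f) v + (u - v) * c)"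
proof (induction f)
  case 0
  then show ?case by simp
next
  case (pCons b g)
  then obtain c where c: "poly g u - poly g v = (u - v) * (poly (pderiv g) v + (u - v) * c)" by blast
  have gu: "poly g u = poly g v + (u - v) * (poly (pderiv g) v + (u - v) * c)" using c by simp
  have "poly (pCons b g) u - poly (pCons b g) v
      = (u - v) * (poly (pderiv (pCons b g)) v + (u - v) * (poly (pderiv g) v + (u - v) * c + v * c))"
    by (simp add: pderiv_pCons gu algebra_simps)
  then show ?case by blast
qed

definition Dp :: "int poly \<Rightarrow> nat \<Rightarrow> int \<Rightarrow> int" where
  "Dp f N v = (\<Prod>i<N. poly (pderiv f) ((poly f ^^ i) v))"

lemma Dp_Suc: "Dp f (Suc N) v = Dp f N v * poly (pderiv f) ((poly f ^^ N) v)"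
  unfolding Dp_def by simp

lemma Dp_add: "Dp f (A + B) v = Dp f A v * Dp f B ((poly f ^^ A) v)"
proof (induction B)
  case 0
  then show ?case by (simp add: Dp_def)
next
  case (Suc B)
  have "(poly f ^^ (A + B)) v = (poly f ^^ B) ((poly f ^^ A) v)"
    by (simp add: funpow_add add.commute[of A B])
  then show ?case using Suc by (simp add: Dp_Suc)
qed

lemma iter_cong_int:
  fixes f :: "int poly"
  assumes "n dvd x - y"
  shows "n dvd (poly f ^^ N) x - (poly f ^^ N) y"
  using assms by (induction N) (simp_all add: poly_cong_int)

lemma Dp_cong:
  fixes f :: "int poly"
  assumes "n dvd x - y"
  shows "n dvd Dp f N x - Dp f N y"
proof -
  have "[Dp f N x = Dp f N y] (mod n)"
    unfolding Dp_def
  proof (rule cong_prod)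
    fix i assume "i \<in> {..<N}"
    have "n dvd poly (pderiv f) ((poly f ^^ i) x) - poly (pderiv f) ((poly f ^^ i) y)"
      by (rule poly_cong_int, rule iter_cong_int, rule assms)
    then show "[poly (pderiv f) ((poly f ^^ i) x) = poly (pderiv f) ((poly f ^^ i) y)] (mod n)"
      by (simp add: cong_iff_dvd_diff)
  qed
  then show ?thesis by (simp add: cong_iff_dvd_diff)
qed

lemma iter_diff:
  fixes f :: "int poly" and p q u v :: int
  assumes pq: "p dvd q" and quv: "q dvd u - v"
  shows "q * p dvd ((poly f ^^ N) u - (poly f ^^ N) v) - (u - v) * Dp f N v"
proof (induction N)
  case 0
  then show ?case by (simp add: Dp_def)
next
  case (Suc N)
  define U where "U = (poly f ^^ N) u"
  define V where "V = (poly f ^^ N) v"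
  define d where "d = Dp f N v"
  have IH: "q * p dvd (U - V) - (u - v) * d" using Suc unfolding U_def V_def d_def .
  have "q dvd (U - V) - (u - v) * d" using IH dvd_mult_left by blast
  moreover have "q dvd (u - v) * d" using quv by simp
  ultimately have "q dvd ((U - V) - (u - v) * d) + (u - v) * d" by (rule dvd_add)
  then have qUV: "q dvd U - V" by simp
  obtain c where c: "poly f U - poly f V = (U - V) * (poly (pderiv f) V + (U - V) * c)"
    using taylor1 by blast
  have "q * p dvd (U - V) * (U - V)" using qUV pq by (meson mult_dvd_mono dvd_trans)
  then have A: "q * p dvd (U - V) * ((U - V) * c)" by (metis dvd_mult2 mult.assoc)
  have B: "q * p dvd ((U - V) - (u - v) * d) * poly (pderiv f) V" using IH by simp
  have "((poly f ^^ Suc N) u - (poly f ^^ Suc N) v) - (u - v) * Dp f (Suc N) v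
      = (poly f U - poly f V) - (u - v) * d * poly (pderiv f) V"
    by (simp add: U_def V_def d_def Dp_Suc)
  also have "\<dots> = (U - V) * ((U - V) * c) + ((U - V) - (u - v) * d) * poly (pderiv f) V"
    unfolding c by (simp add: algebra_simps)
  finally have "((poly f ^^ Suc N) u - (poly f ^^ Suc N) v) - (u - v) * Dp f (Suc N) v
      = (U - V) * ((U - V) * c) + ((U - V) - (u - v) * d) * poly (pderiv f) V" .
  then show ?case using A B by (simp add: dvd_add)
qed


lemma funpow_shift: "(g ^^ (m + i)) x = (g ^^ i) ((g ^^ m) x)"
  by (metis add.commute comp_apply funpow_add)

lemma reduce_p:
  assumes p: "prime p" and k: "k \<ge> 1"
  shows "kappa f a p \<le> kappa f a (p ^ k) \<and> lambda f a p dvd lambda f a (p ^ k)"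
proof -
  have p1: "p \<ge> 1" using p prime_gt_0_nat by (simp add: Suc_leI)
  have pk1: "p ^ k \<ge> 1" using p1 by simp
  define K where "K = kappa f a (p ^ k)"
  define L where "L = lambda f a (p ^ k)"
  have L1: "L \<ge> 1" unfolding L_def by (rule key(1)[OF pk1])
  have "int (p ^ k) dvd (poly f ^^ K) a - (poly f ^^ (K + L)) a"
    using key(2)[OF pk1 L1, where f=f and a=a and k'=K] unfolding K_def L_def by simp
  moreover have "int p dvd int (p ^ k)" using k by (simp add: dvd_power)
  ultimately have "int p dvd (poly f ^^ K) a - (poly f ^^ (K + L)) a" using dvd_trans by blast
  then show ?thesis using key(2)[OF p1 L1, where f=f and a=a and k'=K] unfolding K_def L_def by simp
qed

theorem theorem4p3:
  fixes f :: "int poly" and a :: int and p k :: nat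
  assumes "tower_stable f" and "a > 0" and "prime p" and "k \<ge> 1"
  defines "\<mu> \<equiv> (\<Prod>i<lambda f a p. poly (pderiv f) ((poly f ^^ (kappa f a p + i)) a))"
  shows "(\<mu> mod int p = 0 \<longrightarrow>
            lambda f a (p ^ k) = lambda f a p \<and>
            kappa f a (p ^ k) \<le> kappa f a p + (k - 1) * lambda f a p)
       \<and> (\<not> \<mu> mod int p = 0 \<longrightarrow>
            kappa f a (p ^ k) = kappa f a p \<and>
            lambda f a (p ^ k) dvd lambda f a p * (p - 1) * p ^ (k - 1))"
proof -
  note p = \<open>prime p\<close> and k = \<open>k \<ge> 1\<close>
  have p1: "p \<ge> 1" using p prime_gt_0_nat by (simp add: Suc_leI)
  have p2: "p \<ge> 2" using p prime_ge_2_nat by blast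
  have pk1: "p ^ k \<ge> 1" using p1 by simp
  define X where "X j = (poly f ^^ j) a" for j
  define kp where "kp = kappa f a p"
  define lm where "lm = lambda f a p"
  define y where "y = X kp"
  have lm1: "lm \<ge> 1" unfolding lm_def by (rule key(1)[OF p1])
  have Xs: "X (kp + i) = (poly f ^^ i) y" for i unfolding X_def y_def by (rule funpow_shift)
  have Xadd: "(poly f ^^ i) (X j) = X (j + i)" for i j unfolding X_def by (rule funpow_shift[symmetric])
  have mu: "\<mu> = Dp f lm y" unfolding \<mu>_def Dp_def lm_def[symmetric] kp_def[symmetric]
    using Xs unfolding X_def by simp
  have per: "int p dvd X (kp + lm * t) - y" for t
  proof (cases "t = 0")
    case True then show ?thesis by (simp add: y_def)
  next
    case False
    then have "lm * t \<ge> 1" using lm1 by simp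
    then have "int p dvd X kp - X (kp + lm * t)"
      using key(2)[OF p1, where l'="lm * t" and f=f and a=a and k'=kp] unfolding X_def kp_def lm_def by simp
    then show ?thesis unfolding y_def using dvd_diff_commute by blast
  qed
  have red: "kp \<le> kappa f a (p ^ k) \<and> lm dvd lambda f a (p ^ k)"
    using reduce_p[OF p k, where f=f and a=a] unfolding kp_def lm_def .
  have part1: "lambda f a (p ^ k) = lm \<and> kappa f a (p ^ k) \<le> kp + (k - 1) * lm"
    if mu0: "\<mu> mod int p = 0"
  proof -
    have pmu: "int p dvd \<mu>" using mu0 by (simp add: dvd_eq_mod_eq_0)
    have cl: "int p ^ (m + 1) dvd X (kp + (m + 1) * lm) - X (kp + m * lm)" for m
    proof (induction m)
      case 0
      then show ?case using per[of 1] unfolding y_def by simp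
    next
      case (Suc m)
      define u where "u = X (kp + (m + 1) * lm)"
      define v where "v = X (kp + m * lm)"
      have "int p dvd int p ^ (m + 1)" by simp
      from iter_diff[OF this Suc[folded u_def v_def], where f=f and N=lm]
      have A: "int p ^ (m + 1) * int p dvd ((poly f ^^ lm) u - (poly f ^^ lm) v) - (u - v) * Dp f lm v" .
      have "int p dvd v - y" unfolding v_def using per[of m] by (simp add: ac_simps)
      then have "int p dvd Dp f lm v - Dp f lm y" by (rule Dp_cong)
      moreover have "Dp f lm v = (Dp f lm v - Dp f lm y) + \<mu>" using mu by simp
      ultimately have "int p dvd Dp f lm v" using pmu by (metis dvd_add)
      then have B: "int p ^ (m + 1) * int p dvd (u - v) * Dp f lm v"
        using Suc by (simp add: u_def v_def mult_dvd_mono)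
      have "(poly f ^^ lm) u = X (kp + (Suc m + 1) * lm)"
        unfolding u_def Xadd by (simp add: algebra_simps)
      moreover have "(poly f ^^ lm) v = X (kp + (Suc m) * lm)"
        unfolding v_def Xadd by (simp add: algebra_simps)
      moreover have "int p ^ (Suc m + 1) = int p ^ (m + 1) * int p" by simp
      ultimately show ?case using dvd_add[OF A B] unfolding u_def v_def by (simp add: ac_simps)
    qed
    obtain k0 where k0: "k = Suc k0" using k by (cases k) auto
    have "int p ^ k dvd X (kp + k0 * lm + lm) - X (kp + k0 * lm)"
      using cl[of k0] unfolding k0 by (simp add: algebra_simps)
    then have d: "int (p ^ k) dvd X (kp + k0 * lm) - X (kp + k0 * lm + lm)"
      using dvd_diff_commute by (metis of_nat_power)
    have "int (p ^ k) dvd X (kp + k0 * lm) - X (kp + k0 * lm + lm)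
       \<longleftrightarrow> kappa f a (p ^ k) \<le> kp + k0 * lm \<and> lambda f a (p ^ k) dvd lm"
      unfolding X_def by (rule key(2)[OF pk1 lm1])
    then have "kappa f a (p ^ k) \<le> kp + (k - 1) * lm \<and> lambda f a (p ^ k) dvd lm"
      using d k0 by simp
    then show ?thesis using red by (auto intro: dvd_antisym)
  qed
  have part2: "kappa f a (p ^ k) = kp \<and> lambda f a (p ^ k) dvd lm * (p - 1) * p ^ (k - 1)"
    if mu0: "\<not> \<mu> mod int p = 0"
  proof -
    have npmu: "\<not> int p dvd \<mu>" using mu0 by (simp add: dvd_eq_mod_eq_0)
    define b where "b = nat (\<mu> mod int p)"
    have bmu: "int b = \<mu> mod int p" unfolding b_def using p1 by simp
    have "\<not> p dvd b"
    proof
      assume "p dvd b"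
      then have "int p dvd int b" by simp
      then have "int p dvd \<mu> mod int p" using bmu by simp
      then show False using npmu by (simp add: dvd_mod_iff)
    qed
    then have "[b ^ (p - 1) = 1] (mod p)" using fermat_theorem[OF p] by blast
    then have "[int b ^ (p - 1) = 1] (mod int p)" by (metis cong_int_iff of_nat_1 of_nat_power)
    moreover have "[int b = \<mu>] (mod int p)" using bmu by (simp add: cong_def)
    ultimately have ferm: "[\<mu> ^ (p - 1) = 1] (mod int p)" by (metis cong_pow cong_sym cong_trans)
    define NN where "NN m = (p - 1) * p ^ m" for m
    define L where "L m = lm * NN m" for m
    have muN: "[\<mu> ^ NN m = 1] (mod int p)" for m
      unfolding NN_def power_mult using cong_pow[OF ferm, of "p ^ m"] by simp
    have DpN: "[Dp f (lm * N) y = \<mu> ^ N] (mod int p)" for N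
    proof (induction N)
      case 0
      then show ?case by (simp add: Dp_def)
    next
      case (Suc N)
      have "Dp f (lm * Suc N) y = Dp f (lm * N) y * Dp f lm ((poly f ^^ (lm * N)) y)"
        by (simp add: Dp_add[symmetric] ac_simps)
      moreover have "(poly f ^^ (lm * N)) y = X (kp + lm * N)" by (simp add: Xs)
      moreover have "int p dvd Dp f lm (X (kp + lm * N)) - Dp f lm y"
        by (rule Dp_cong, rule per)
      ultimately have "[Dp f (lm * Suc N) y = Dp f (lm * N) y * \<mu>] (mod int p)"
        using mu by (simp add: cong_iff_dvd_diff flip: right_diff_distrib)
      moreover have "[Dp f (lm * N) y * \<mu> = \<mu> ^ N * \<mu>] (mod int p)"
        using Suc by (simp add: cong_mult)
      ultimately show ?case by (metis cong_trans power_Suc2)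
    qed
    have DpL: "int p dvd Dp f (L m) y - 1" for m
      using cong_trans[OF DpN[of "NN m"] muN[of m]] unfolding L_def by (simp add: cong_iff_dvd_diff)
    have cl: "int p ^ (m + 1) dvd X (kp + L m) - y" for m
    proof (induction m)
      case 0
      then show ?case using per[of "p - 1"] unfolding L_def NN_def by simp
    next
      case (Suc m)
      define q where "q = int p ^ (m + 1)"
      define hy where "hy = X (kp + L m)"
      have hyF: "hy = (poly f ^^ L m) y" unfolding hy_def by (rule Xs)
      have qh: "q dvd hy - y" using Suc unfolding q_def hy_def .
      have pq: "int p dvd q" unfolding q_def by simp
      have cl2: "q * int p dvd ((poly f ^^ (L m * i)) y - y) - int i * (hy - y)" for i
      proof (induction i)
        case 0
        then show ?case by simp
      next
        case (Suc i)
        define z where "z = (poly f ^^ (L m * i)) y"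
        have I: "q * int p dvd (z - y) - int i * (hy - y)" using Suc unfolding z_def .
        have "q dvd (z - y) - int i * (hy - y)" using I dvd_mult_left by blast
        moreover have "q dvd int i * (hy - y)" using qh by simp
        ultimately have "q dvd ((z - y) - int i * (hy - y)) + int i * (hy - y)" by (rule dvd_add)
        then have qz: "q dvd z - y" by simp
        have A: "q * int p dvd ((poly f ^^ L m) z - (poly f ^^ L m) y) - (z - y) * Dp f (L m) y"
          by (rule iter_diff[OF pq qz])
        have B: "q * int p dvd (z - y) * (Dp f (L m) y - 1)"
          using qz DpL[of m] by (rule mult_dvd_mono)
        have Fz: "(poly f ^^ L m) z = (poly f ^^ (L m * Suc i)) y"
          unfolding z_def by (simp add: funpow_shift[symmetric] ac_simps)
        have "((poly f ^^ (L m * Suc i)) y - y) - int (Suc i) * (hy - y)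
           = (((poly f ^^ L m) z - (poly f ^^ L m) y) - (z - y) * Dp f (L m) y)
             + (z - y) * (Dp f (L m) y - 1) + ((z - y) - int i * (hy - y))"
          unfolding Fz[symmetric] hyF[symmetric] by (simp add: algebra_simps)
        then show ?case using A B I by (metis dvd_add)
      qed
      have "q * int p dvd int p * (hy - y)" using qh by (simp add: mult_dvd_mono)
      then have "q * int p dvd (poly f ^^ (L m * p)) y - y"
        using cl2[of p] by (metis dvd_add diff_add_cancel)
      moreover have "L m * p = L (Suc m)" unfolding L_def NN_def by simp
      moreover have "q * int p = int p ^ (Suc m + 1)" unfolding q_def by simp
      ultimately show ?case using Xs by metis
    qed
    obtain k0 where k0: "k = Suc k0" using k by (cases k) auto
    have d: "int (p ^ k) dvd X kp - X (kp + L k0)"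
      using cl[of k0] unfolding k0 y_def by (metis dvd_diff_commute of_nat_power Suc_eq_plus1)
    have L1: "L k0 \<ge> 1" unfolding L_def NN_def using lm1 p2 by simp
    have "int (p ^ k) dvd X kp - X (kp + L k0)
       \<longleftrightarrow> kappa f a (p ^ k) \<le> kp \<and> lambda f a (p ^ k) dvd L k0"
      unfolding X_def by (rule key(2)[OF pk1 L1])
    then have "kappa f a (p ^ k) \<le> kp \<and> lambda f a (p ^ k) dvd L k0" using d by simp
    moreover have "L k0 = lm * (p - 1) * p ^ (k - 1)" unfolding L_def NN_def k0 by simp
    ultimately show ?thesis using red by auto
  qed
  show ?thesis using part1 part2 unfolding kp_def lm_def by blast
qed

end
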